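(* Let $n\ge1$, let $\mathcal{I}\in\{\mathcal{N},\mathcal{M}\}$ and let $\kappa$ be a cardinal. If $\mathrm{cov}(\mathcal{I})=\mathrm{cof}(\mathcal{I})=\kappa$, then there exists a linear subspace $H$ of $\mathbb{R}^n$, considered as a vector space over $\mathbb{Q}$, which is a $\kappa$-Luzin set for $\mathcal{I}$.
   Context: $\mathcal{N}$ is the $\sigma$-ideal of Lebesgue null subsets of $\mathbb{R}^n$, and $\mathcal{M}$ is the $\sigma$-ideal of meager subsets of $\mathbb{R}^n$. $\mathrm{cov}(\mathcal{I})=\min\{|\mathcal{F}|:\mathcal{F}\subseteq\mathcal{I},\ \bigcup\mathcal{F}=\mathbb{R}^n\}$. $\mathrm{cof}(\mathcal{I})=\min\{|\mathcal{F}|:\mathcal{F}\subseteq\mathcal{I},\ \forall A\in\mathcal{I}\ \exists B\in\mathcal{F}\ A\subseteq B\}$. A $\kappa$-Luzin set for $\mathcal{I}$ is a set $L\subseteq\mathbb{R}^n$ with $|L|\ge\kappa$ such that $|L\cap B|<\kappa$ for every $B\in\mathcal{I}$. *)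

theory Defs
  imports "HOL-Analysis.Analysis"
begin


text \<open>Lebesgue null subsets of R^n (lebesgue is the completed measure, so these are
  exactly the sets of outer measure zero).\<close>
definition null_ideal :: "('a::euclidean_space) set set" where
  "null_ideal = {A. A \<in> null_sets lebesgue}"

definition nowhere_dense :: "('a::topological_space) set \<Rightarrow> bool" where
  "nowhere_dense A \<longleftrightarrow> interior (closure A) = {}"

definition meager_ideal :: "('a::topological_space) set set" where
  "meager_ideal = {A. \<exists>F. countable F \<and> (\<forall>N\<in>F. nowhere_dense N) \<and> A \<subseteq> \<Union>F}"

text \<open>The cardinal kappa is represented as the cardinality of a set K.\<close>
definition cov_is :: "'a set set \<Rightarrow> 'k set \<Rightarrow> bool" where
  "cov_is I K \<longleftrightarrow>
     (\<exists>F. F \<subseteq> I \<and> \<Union>F = UNIV \<and> ordIso2 (card_of (F)) (card_of (K))) \<and>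
     (\<forall>F. F \<subseteq> I \<and> \<Union>F = UNIV \<longrightarrow> ordLeq3 (card_of (K)) (card_of (F)))"

definition cof_is :: "'a set set \<Rightarrow> 'k set \<Rightarrow> bool" where
  "cof_is I K \<longleftrightarrow>
     (\<exists>F. F \<subseteq> I \<and> (\<forall>A\<in>I. \<exists>B\<in>F. A \<subseteq> B) \<and> ordIso2 (card_of (F)) (card_of (K))) \<and>
     (\<forall>F. F \<subseteq> I \<and> (\<forall>A\<in>I. \<exists>B\<in>F. A \<subseteq> B) \<longrightarrow> ordLeq3 (card_of (K)) (card_of (F)))"

definition luzin_set :: "'a set set \<Rightarrow> 'k set \<Rightarrow> 'a set \<Rightarrow> bool" where
  "luzin_set I K L \<longleftrightarrow> ordLeq3 (card_of (K)) (card_of (L)) \<and> (\<forall>B\<in>I. ordLess2 (card_of (L \<inter> B)) (card_of (K)))"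

definition rat_subspace :: "('a::real_vector) set \<Rightarrow> bool" where
  "rat_subspace H \<longleftrightarrow> 0 \<in> H \<and> (\<forall>x\<in>H. \<forall>y\<in>H. x + y \<in> H) \<and>
     (\<forall>q\<in>\<rat>. \<forall>x\<in>H. q *\<^sub>R x \<in> H)"

end

theory Submission
  imports Defs
begin

unbundle cardinal_syntax


lemma nd_preimage:
  fixes N :: "(real^'n) set"
  assumes "nowhere_dense N" "c \<noteq> 0"
  shows "nowhere_dense {y. h + c *\<^sub>R y \<in> N}"
proof -
  define f where "f = (\<lambda>z::real^'n. inverse c *\<^sub>R (z - h))"
  define g where "g = (\<lambda>y::real^'n. h + c *\<^sub>R y)"
  have hm: "homeomorphic_map euclidean euclidean f"
    unfolding homeomorphic_map_maps homeomorphic_maps_def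
    apply (rule exI[of _ g])
    using assms(2) by (auto simp: f_def g_def intro!: continuous_intros)
  have eq: "{y. h + c *\<^sub>R y \<in> N} = f ` N"
    using assms(2) by (force simp: f_def image_iff)
  show ?thesis using assms(1)
    unfolding nowhere_dense_def eq
    using homeomorphic_map_closure_of[OF hm, of N] homeomorphic_map_interior_of[OF hm, of "closure N"]
    by simp
qed

lemma neg_preimage:
  fixes N :: "(real^'n) set"
  assumes "negligible N" "c \<noteq> 0"
  shows "negligible {y. h + c *\<^sub>R y \<in> N}"
proof -
  define f where "f = (\<lambda>z::real^'n. inverse c *\<^sub>R (z - h))"
  have eq: "{y. h + c *\<^sub>R y \<in> N} = f ` N"
    using assms(2) by (force simp: f_def image_iff)
  have "f differentiable_on N" unfolding f_def
    by (intro derivative_intros)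
  then show ?thesis unfolding eq
    by (intro negligible_differentiable_image_negligible assms) auto
qed

lemma not_neg_UNIV: "\<not> negligible (UNIV :: (real^'n) set)"
proof
  assume "negligible (UNIV :: (real^'n) set)"
  then have "negligible (cbox (0::real^'n) One)" using negligible_subset by blast
  moreover have "box (0::real^'n) One \<noteq> {}"
    by (simp add: box_eq_empty inner_Basis)
  ultimately show False using negligible_interval by blast
qed

lemma meager_nocover:
  assumes "G \<subseteq> (meager_ideal :: (real^'n) set set)" "countable G"
  shows "\<Union>G \<noteq> UNIV"
proof
  assume cov: "\<Union>G = UNIV"
  have "\<forall>A\<in>G. \<exists>F. countable F \<and> (\<forall>N\<in>F. nowhere_dense N) \<and> A \<subseteq> \<Union>F"
    using assms(1) by (auto simp: meager_ideal_def)
  then obtain F where F: "\<And>A. A\<in>G \<Longrightarrow> countable (F A) \<and> (\<forall>N\<in>F A. nowhere_dense N) \<and> A \<subseteq> \<Union>(F A)"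
    by metis
  define E where "E = (\<Union>A\<in>G. F A)"
  have cE: "countable E" using F assms(2) by (auto simp: E_def)
  have ndE: "\<And>N. N \<in> E \<Longrightarrow> nowhere_dense N" using F by (auto simp: E_def)
  have UE: "\<Union>E = UNIV" using cov F unfolding E_def by blast
  define \<G> where "\<G> = (\<lambda>N. - closure N) ` E"
  have "(UNIV::(real^'n) set) \<subseteq> closure (\<Inter>\<G>)"
  proof (rule Baire)
    show "countable \<G>" using cE by (simp add: \<G>_def)
    fix T assume "T \<in> \<G>"
    then obtain N where N: "N \<in> E" "T = - closure N" by (auto simp: \<G>_def)
    have "closure T = UNIV"
      using ndE[OF N(1)] N(2) by (simp add: closure_complement nowhere_dense_def)
    then show "openin (top_of_set UNIV) T \<and> UNIV \<subseteq> closure T"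
      using N(2) by auto
  qed auto
  moreover have "\<Inter>\<G> = {}"
    using UE closure_subset unfolding \<G>_def by blast
  ultimately show False by simp
qed

lemma ideal_props:
  fixes I :: "(real^'n) set set"
  assumes "I = null_ideal \<or> I = meager_ideal"
  shows "\<And>a. {a} \<in> I"
    and "\<And>B h c. B \<in> I \<Longrightarrow> c \<noteq> 0 \<Longrightarrow> {y. h + c *\<^sub>R y \<in> B} \<in> I"
    and "\<And>G. G \<subseteq> I \<Longrightarrow> countable G \<Longrightarrow> \<Union>G \<noteq> UNIV"
  using assms
proof -
  fix a
  show "{a} \<in> I" using assms
    by (auto simp: null_ideal_def meager_ideal_def nowhere_dense_def negligible_iff_null_sets[symmetric]
        intro!: exI[of _ "{{a}}"])
next
  fix B h c assume "B \<in> I" "(c::real) \<noteq> 0"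
  then show "{y. h + c *\<^sub>R y \<in> B} \<in> I" using assms
  proof (elim disjE)
    assume "I = null_ideal" then show ?thesis using \<open>B \<in> I\<close> neg_preimage[OF _ \<open>c \<noteq> 0\<close>]
      by (simp add: null_ideal_def negligible_iff_null_sets[symmetric])
  next
    assume I: "I = meager_ideal"
    then obtain F where F: "countable F" "\<forall>N\<in>F. nowhere_dense N" "B \<subseteq> \<Union>F"
      using \<open>B \<in> I\<close> by (auto simp: meager_ideal_def)
    show ?thesis unfolding I meager_ideal_def
      apply (rule CollectI, rule exI[of _ "(\<lambda>N. {y. h + c *\<^sub>R y \<in> N}) ` F"])
      using F nd_preimage[OF _ \<open>c \<noteq> 0\<close>] by auto
  qed
next
  fix G assume G: "G \<subseteq> I" "countable G"
  show "\<Union>G \<noteq> UNIV" using assms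
  proof (elim disjE)
    assume "I = null_ideal"
    then have "negligible (\<Union>G)" using G
      by (intro negligible_countable_Union) (auto simp: null_ideal_def negligible_iff_null_sets)
    then show ?thesis using not_neg_UNIV by metis
  next
    assume "I = meager_ideal" then show ?thesis using G meager_nocover by blast
  qed
qed




fun rsp :: "('a::real_vector) set \<Rightarrow> nat \<Rightarrow> 'a set" where
  "rsp S 0 = insert 0 S"
| "rsp S (Suc n) = rsp S n \<union> (\<lambda>(a,b). a+b) ` (rsp S n \<times> rsp S n)
     \<union> (\<lambda>(q,a). of_rat q *\<^sub>R a) ` ((UNIV::rat set) \<times> rsp S n)"

definition rspan :: "('a::real_vector) set \<Rightarrow> 'a set" where
  "rspan S = (\<Union>n. rsp S n)"

lemma rsp_mono: "m \<le> n \<Longrightarrow> rsp S m \<subseteq> rsp S n"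
  by (induction n rule: dec_induct) auto

lemma rspan_subspace: "rat_subspace (rspan S)"
  unfolding rat_subspace_def
proof (intro conjI ballI)
  have "0 \<in> rsp S 0" by simp
  then show "0 \<in> rspan S" unfolding rspan_def by blast
next
  fix x y assume "x \<in> rspan S" "y \<in> rspan S"
  then obtain m n where "x \<in> rsp S m" "y \<in> rsp S n" by (auto simp: rspan_def)
  then have "x \<in> rsp S (max m n)" "y \<in> rsp S (max m n)"
    using rsp_mono[of m "max m n" S] rsp_mono[of n "max m n" S] by (auto simp del: rsp.simps)
  then have "x + y \<in> (\<lambda>(a,b). a+b) ` (rsp S (max m n) \<times> rsp S (max m n))"
    by (simp add: image_iff) blast
  then have "x + y \<in> rsp S (Suc (max m n))" by simp
  then show "x + y \<in> rspan S" unfolding rspan_def by blast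
next
  fix q :: real and x assume "q \<in> \<rat>" "x \<in> rspan S"
  then obtain n r where "x \<in> rsp S n" "q = of_rat r" by (auto simp: rspan_def Rats_def)
  then have "q *\<^sub>R x \<in> (\<lambda>(q,a). of_rat q *\<^sub>R a) ` ((UNIV::rat set) \<times> rsp S n)"
    by (simp add: image_iff) blast
  then have "q *\<^sub>R x \<in> rsp S (Suc n)" by simp
  then show "q *\<^sub>R x \<in> rspan S" unfolding rspan_def by blast
qed

lemma rspan_base: "S \<subseteq> rspan S"
proof
  fix x assume "x \<in> S" then have "x \<in> rsp S 0" by simp
  then show "x \<in> rspan S" unfolding rspan_def by blast
qed

lemma rspan_least:
  assumes "rat_subspace V" "S \<subseteq> V"
  shows "rspan S \<subseteq> V"
proof -
  have "rsp S n \<subseteq> V" for n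
  proof (induction n)
    case 0 then show ?case using assms by (auto simp: rat_subspace_def)
  next
    case (Suc n)
    have "\<forall>x\<in>V. \<forall>y\<in>V. x + y \<in> V" "\<forall>q::rat. \<forall>x\<in>V. of_rat q *\<^sub>R x \<in> V"
      using assms(1) by (auto simp: rat_subspace_def)
    then show ?case using Suc by (auto simp del: rsp.simps simp: rsp.simps(2)) blast+
  qed
  then show ?thesis by (auto simp: rspan_def)
qed

lemma rspan_mono: "S \<subseteq> T \<Longrightarrow> rspan S \<subseteq> rspan T"
  using rspan_least[OF rspan_subspace] rspan_base by blast

lemma rspan_insert:
  assumes "y \<in> rspan (insert a S)"
  shows "\<exists>h\<in>rspan S. \<exists>q\<in>\<rat>. y = h + q *\<^sub>R a"
proof -
  let ?V = "{y. \<exists>h\<in>rspan S. \<exists>q\<in>\<rat>. y = h + q *\<^sub>R a}"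
  have "rat_subspace ?V" unfolding rat_subspace_def
  proof (intro conjI ballI)
    show "0 \<in> ?V" using rspan_subspace[of S]
      by (auto simp: rat_subspace_def intro!: bexI[of _ 0])
  next
    fix x y assume "x \<in> ?V" "y \<in> ?V"
    then obtain h1 q1 h2 q2 where "h1 \<in> rspan S" "q1 \<in> \<rat>" "x = h1 + q1 *\<^sub>R a"
      "h2 \<in> rspan S" "q2 \<in> \<rat>" "y = h2 + q2 *\<^sub>R a" by auto
    then show "x + y \<in> ?V" using rspan_subspace[of S]
      by (auto simp: rat_subspace_def algebra_simps intro!: bexI[of _ "h1+h2"] bexI[of _ "q1+q2"])
  next
    fix q :: real and x assume "q \<in> \<rat>" "x \<in> ?V"
    then obtain h1 q1 where "h1 \<in> rspan S" "q1 \<in> \<rat>" "x = h1 + q1 *\<^sub>R a" by auto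
    then show "q *\<^sub>R x \<in> ?V" using rspan_subspace[of S] \<open>q \<in> \<rat>\<close>
      by (auto simp: rat_subspace_def algebra_simps intro!: bexI[of _ "q *\<^sub>R h1"] bexI[of _ "q*q1"])
  qed
  moreover have "insert a S \<subseteq> ?V"
  proof
    fix z assume "z \<in> insert a S"
    then show "z \<in> ?V"
    proof
      assume "z = a" then show ?thesis using rspan_subspace[of S]
        by (auto simp: rat_subspace_def intro!: bexI[of _ 0] bexI[of _ 1])
    next
      assume "z \<in> S" then have "z \<in> rspan S" "z = z + 0 *\<^sub>R a" using rspan_base[of S] by auto
      moreover have "(0::real) \<in> \<rat>" by simp
      ultimately show ?thesis by blast
    qed
  qed
  ultimately show ?thesis using rspan_least assms by blast
qed

lemma rspan_finite:
  assumes "y \<in> rspan S"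
  shows "\<exists>F. finite F \<and> F \<subseteq> S \<and> y \<in> rspan F"
proof -
  let ?V = "{y. \<exists>F. finite F \<and> F \<subseteq> S \<and> y \<in> rspan F}"
  have "rat_subspace ?V" unfolding rat_subspace_def
  proof (intro conjI ballI)
    show "0 \<in> ?V" using rspan_subspace[of "{}"]
      by (auto simp: rat_subspace_def intro!: exI[of _ "{}"])
  next
    fix x y assume "x \<in> ?V" "y \<in> ?V"
    then obtain F1 F2 where "finite F1" "F1 \<subseteq> S" "x \<in> rspan F1" "finite F2" "F2 \<subseteq> S" "y \<in> rspan F2"
      by auto
    then have "x \<in> rspan (F1 \<union> F2)" "y \<in> rspan (F1 \<union> F2)"
      using rspan_mono[of F1 "F1 \<union> F2"] rspan_mono[of F2 "F1 \<union> F2"] by auto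
    then show "x + y \<in> ?V" using rspan_subspace[of "F1 \<union> F2"] \<open>finite F1\<close> \<open>finite F2\<close> \<open>F1 \<subseteq> S\<close> \<open>F2 \<subseteq> S\<close>
      by (auto simp: rat_subspace_def intro!: exI[of _ "F1 \<union> F2"])
  next
    fix q :: real and x assume "q \<in> \<rat>" "x \<in> ?V"
    then obtain F where "finite F" "F \<subseteq> S" "x \<in> rspan F" by auto
    then have "q *\<^sub>R x \<in> rspan F" using rspan_subspace[of F] \<open>q \<in> \<rat>\<close>
      by (auto simp: rat_subspace_def)
    then show "q *\<^sub>R x \<in> ?V" using \<open>finite F\<close> \<open>F \<subseteq> S\<close> by auto
  qed
  moreover have "S \<subseteq> ?V" using rspan_base by (auto intro!: exI[of _ "{_}"])
  ultimately show ?thesis using rspan_least assms by blast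
qed

lemma rspan_card:
  fixes S :: "('a::real_vector) set" and T :: "'t set"
  assumes inf: "\<not> finite T" and ST: "|S| \<le>o |T|" and QT: "|UNIV::rat set| \<le>o |T|"
  shows "|rspan S| \<le>o |T|"
proof -
  have CT: "Card_order (card_of T)" "\<not> finite (Field (card_of T))" using inf card_of_Card_order[of T] Field_card_of[of T] by auto
  have n: "|rsp S n| \<le>o |T|" for n
  proof (induction n)
    case 0
    have "T \<noteq> {}" using inf by auto
    then have "|{0::'a}| \<le>o |T|" by (rule card_of_singl_ordLeq)
    then have "|{0} \<union> S| \<le>o |T|" using ST CT card_of_Un_ordLeq_infinite_Field by blast
    then show ?case by simp
  next
    case (Suc n)
    have 1: "|rsp S n \<times> rsp S n| \<le>o |T|"
      using Suc CT card_of_Times_ordLeq_infinite_Field by blast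
    have 2: "|(UNIV::rat set) \<times> rsp S n| \<le>o |T|"
      using Suc CT QT card_of_Times_ordLeq_infinite_Field by blast
    have h1: "|(\<lambda>(a,b). a+b) ` (rsp S n \<times> rsp S n)| \<le>o |T|"
      using 1 card_of_image ordLeq_transitive by blast
    have h2: "|(\<lambda>(q,a). of_rat q *\<^sub>R a) ` ((UNIV::rat set) \<times> rsp S n)| \<le>o |T|"
      using 2 card_of_image ordLeq_transitive by blast
    show ?case unfolding rsp.simps
      using Suc h1 h2 CT card_of_Un_ordLeq_infinite_Field by metis
  qed
  have "|UNIV::nat set| \<le>o |T|" using inf infinite_iff_card_of_nat by auto
  then show ?thesis unfolding rspan_def
    using card_of_UNION_ordLeq_infinite[OF inf] n by blast
qed




theorem theorem2p5:
  fixes I :: "(real ^ 'n) set set" and K :: "'k set"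
  assumes "I = null_ideal \<or> I = meager_ideal"
    and "cov_is I K" and "cof_is I K"
  shows "\<exists>H. rat_subspace H \<and> luzin_set I K H"
proof -
  note IP = ideal_props[OF assms(1)]
  from assms(3) obtain Fc where Fc: "Fc \<subseteq> I" "\<forall>A\<in>I. \<exists>B\<in>Fc. A \<subseteq> B" "|Fc| =o |K|"
    unfolding cof_is_def by blast
  from Fc(3) obtain Bf where Bf: "bij_betw Bf K Fc"
    using card_of_ordIso ordIso_symmetric by blast
  have BfK: "\<And>b. b \<in> K \<Longrightarrow> Bf b \<in> I" using Bf Fc(1) bij_betwE by blast
  have small: "\<Union>G \<noteq> UNIV" if "G \<subseteq> I" "|G| <o |K|" for G
  proof
    assume "\<Union>G = UNIV"
    then have "|K| \<le>o |G|" using assms(2) that(1) unfolding cov_is_def by blast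
    then show False using that(2) not_ordLess_ordLeq by blast
  qed
  have ratK: "|UNIV::rat set| <o |K|"
  proof -
    from assms(2) obtain Fv where Fv: "Fv \<subseteq> I" "\<Union>Fv = UNIV" "|Fv| =o |K|"
      unfolding cov_is_def by blast
    have "\<not> |K| \<le>o |UNIV::rat set|"
    proof
      assume "|K| \<le>o |UNIV::rat set|"
      then have "|Fv| \<le>o |UNIV::rat set|" using Fv(3) ordIso_ordLeq_trans by blast
      then obtain f :: "_ \<Rightarrow> rat" where "inj_on f Fv" using card_of_ordLeq[of Fv "UNIV::rat set"] by auto
      moreover have "countable (f ` Fv)" by (rule countable_subset[OF subset_UNIV countableI_type])
      ultimately have "countable Fv" using countable_image_inj_on by blast
      then show False using IP(3)[OF Fv(1)] Fv(2) by simp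
    qed
    then show ?thesis using not_ordLeq_iff_ordLess[OF card_of_Well_order card_of_Well_order] by blast
  qed
  have infK: "\<not> finite K"
  proof
    assume "finite K"
    then have "|K| <o |UNIV::rat set|"
      using finite_ordLess_infinite[OF card_of_Well_order card_of_Well_order, of K "UNIV::rat set"]
        infinite_UNIV_char_0 unfolding Field_card_of by blast
    then show False using ratK not_ordLess_ordLeq[of "|UNIV::rat set|" "|K|"] ordLess_imp_ordLeq by blast
  qed
  define r where "r = |K|"
  have wo: "wo_rel r" unfolding r_def wo_rel_def by (rule card_of_Well_order)
  have FieldK: "Field r = K" unfolding r_def by (rule Field_card_of)
  have Cr: "Card_order r" unfolding r_def by (rule card_of_Card_order)
  define Av where "Av f k = rspan (f ` underS r k) \<union>
     \<Union>((\<lambda>(b,h,q). {y. h + of_rat q *\<^sub>R y \<in> Bf b}) ` (underS r k \<times> rspan (f ` underS r k) \<times> {q::rat. q \<noteq> 0}))"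
    for f :: "'k \<Rightarrow> real^'n" and k
  have Avne: "Av f k \<noteq> UNIV" if k: "k \<in> K" for f k
  proof -
    let ?U = "underS r k"  let ?R = "rspan (f ` ?U)"
    define T where "T = (UNIV::rat set) <+> ?U"
    have UK: "|?U| <o |K|" using card_of_underS[OF Cr] k FieldK r_def by auto
    have TK: "|T| <o |K|" unfolding T_def using card_of_Plus_ordLess_infinite[OF infK ratK UK] .
    have infT: "\<not> finite T" unfolding T_def by (simp add: infinite_UNIV_char_0)
    have CT: "Card_order |T|" "\<not> finite (Field (card_of T))" using infT card_of_Card_order[of T] Field_card_of[of T] by auto
    have QT: "|UNIV::rat set| \<le>o |T|" unfolding T_def by (rule card_of_Plus1)
    have UT: "|?U| \<le>o |T|" unfolding T_def by (rule card_of_Plus2)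
    have RT: "|?R| \<le>o |T|"
      by (rule rspan_card[OF infT _ QT]) (use card_of_image ordLeq_transitive UT in blast)
    have Q'T: "|{q::rat. q\<noteq>0}| \<le>o |T|"
      using card_of_mono1[of "{q::rat. q\<noteq>0}" UNIV] QT ordLeq_transitive by blast
    have RQT: "|?R \<times> {q::rat. q\<noteq>0}| \<le>o |T|" using CT RT Q'T card_of_Times_ordLeq_infinite_Field by blast
    have PT: "|?U \<times> ?R \<times> {q::rat. q\<noteq>0}| \<le>o |T|" using CT UT RQT card_of_Times_ordLeq_infinite_Field by blast
    define G where "G = (\<lambda>s. {s}) ` ?R \<union> (\<lambda>(b,h,q). {y. h + of_rat q *\<^sub>R y \<in> Bf b}) ` (?U \<times> ?R \<times> {q::rat. q \<noteq> 0})"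
    have G1: "|(\<lambda>s. {s}) ` ?R| \<le>o |T|" using card_of_image ordLeq_transitive RT by blast
    have G2: "|(\<lambda>(b,h,q). {y. h + of_rat q *\<^sub>R y \<in> Bf b}) ` (?U \<times> ?R \<times> {q::rat. q \<noteq> 0})| \<le>o |T|"
      using card_of_image ordLeq_transitive PT by blast
    have GT: "|G| \<le>o |T|" unfolding G_def using card_of_Un_ordLeq_infinite_Field[OF CT(2) G1 G2 CT(1)] .
    have GK: "|G| <o |K|" using GT TK ordLeq_ordLess_trans by blast
    have GI: "G \<subseteq> I"
    proof
      fix A assume "A \<in> G"
      then show "A \<in> I" unfolding G_def
      proof
        assume "A \<in> (\<lambda>s. {s}) ` ?R" then show ?thesis using IP(1) by auto
      next
        assume "A \<in> (\<lambda>(b,h,q). {y. h + of_rat q *\<^sub>R y \<in> Bf b}) ` (?U \<times> ?R \<times> {q::rat. q \<noteq> 0})"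
        then obtain b h q where bhq: "b \<in> ?U" "q \<noteq> 0" "A = {y. h + of_rat q *\<^sub>R y \<in> Bf b}" by auto
        have "b \<in> K" using bhq(1) underS_Field FieldK by fastforce
        then show ?thesis using bhq IP(2) BfK by auto
      qed
    qed
    have "Av f k = \<Union>G" unfolding Av_def G_def by auto
    then show "Av f k \<noteq> UNIV" using small GI GK by auto
  qed
  define Hx where "Hx f k = (SOME y. y \<notin> Av f k)" for f k
  have adm: "wo_rel.adm_wo r Hx"
    unfolding wo_rel.adm_wo_def[OF wo] Hx_def Av_def
  proof (intro allI impI)
    fix f g :: "'k \<Rightarrow> real^'n" and k
    assume "\<forall>y\<in>underS r k. f y = g y"
    then have "f ` underS r k = g ` underS r k" by (simp cong: image_cong)
    then show "(SOME y. y \<notin> rspan (f ` underS r k) \<union>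
     \<Union>((\<lambda>(b,h,q). {y. h + of_rat q *\<^sub>R y \<in> Bf b}) ` (underS r k \<times> rspan (f ` underS r k) \<times> {q::rat. q \<noteq> 0}))) =
      (SOME y. y \<notin> rspan (g ` underS r k) \<union>
     \<Union>((\<lambda>(b,h,q). {y. h + of_rat q *\<^sub>R y \<in> Bf b}) ` (underS r k \<times> rspan (g ` underS r k) \<times> {q::rat. q \<noteq> 0})))"
      by simp
  qed
  define x where "x = wo_rel.worec r Hx"
  have xfix: "x = Hx x" using wo_rel.worec_fixpoint[OF wo adm] x_def by simp
  have xk: "x k \<notin> Av x k" if kK: "k \<in> K" for k
  proof -
    obtain y where "y \<notin> Av x k" using Avne[OF kK] by blast
    then have "Hx x k \<notin> Av x k" unfolding Hx_def by (rule someI)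
    then show ?thesis by (metis xfix)
  qed
  have TOT: "\<And>a b. a \<in> K \<Longrightarrow> b \<in> K \<Longrightarrow> (a,b) \<in> r \<or> (b,a) \<in> r"
    using wo_rel.TOTALS[OF wo] FieldK by auto
  have REF: "\<And>a. a \<in> K \<Longrightarrow> (a,a) \<in> r"
    using wo_rel.REFL[OF wo] FieldK by (auto simp: refl_on_def)
  have TR: "\<And>a b c. (a,b) \<in> r \<Longrightarrow> (b,c) \<in> r \<Longrightarrow> (a,c) \<in> r"
    using wo_rel.TRANS[OF wo] by (auto dest: transD)
  define H where "H = rspan (x ` K)"
  have inj: "inj_on x K"
  proof (rule inj_onI)
    fix a b assume ab: "a \<in> K" "b \<in> K" "x a = x b"
    show "a = b"
    proof (rule ccontr)
      assume ne: "a \<noteq> b"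
      have *: False if "(c,d) \<in> r" "c \<noteq> d" "c \<in> K" "d \<in> K" "x c = x d" for c d
      proof -
        have "c \<in> underS r d" using that by (simp add: underS_def)
        then have "x c \<in> rspan (x ` underS r d)" using rspan_base[of "x ` underS r d"] by blast
        then have "x c \<in> Av x d" unfolding Av_def by (rule UnI1)
        then show False using xk[OF that(4)] that(5) by simp
      qed
      from TOT[OF ab(1,2)] show False
      proof
        assume "(a,b) \<in> r" then show False using *[of a b] ne ab by blast
      next
        assume "(b,a) \<in> r" then show False using *[of b a] ne ab by auto
      qed
    qed
  qed
  have maxex: "\<And>A. finite A \<Longrightarrow> A \<noteq> {} \<Longrightarrow> A \<subseteq> K \<Longrightarrow> \<exists>m\<in>A. \<forall>a\<in>A. (a,m) \<in> r"
  proof -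
    fix A :: "'k set" assume "finite A" "A \<noteq> {}" "A \<subseteq> K"
    then show "\<exists>m\<in>A. \<forall>a\<in>A. (a,m) \<in> r"
    proof (induction rule: finite_ne_induct)
      case (singleton a) then show ?case using REF by auto
    next
      case (insert a A)
      then obtain m where m: "m \<in> A" "\<forall>b\<in>A. (b,m) \<in> r" by auto
      have "a \<in> K" "m \<in> K" using insert m by auto
      then consider "(a,m) \<in> r" | "(m,a) \<in> r" using TOT by blast
      then show ?case
      proof cases
        case 1 then show ?thesis using m by auto
      next
        case 2 then show ?thesis using m TR REF \<open>a \<in> K\<close> by blast
      qed
    qed
  qed
  have key: "\<forall>A y. card A = n \<longrightarrow> finite A \<longrightarrow> A \<subseteq> K \<longrightarrow> y \<in> rspan (x ` A) \<longrightarrow> y \<in> Bf \<beta>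
     \<longrightarrow> y \<in> rspan (x ` under r \<beta>)" if \<beta>K: "\<beta> \<in> K" for n \<beta>
  proof (induction n rule: less_induct)
    case (less n)
    show ?case
    proof (intro allI impI)
      fix A y assume A: "card A = n" "finite A" "A \<subseteq> K" "y \<in> rspan (x ` A)" "y \<in> Bf \<beta>"
      show "y \<in> rspan (x ` under r \<beta>)"
      proof (cases "A \<subseteq> under r \<beta>")
        case True
        then show ?thesis using A(4) rspan_mono[of "x ` A" "x ` under r \<beta>"] by blast
      next
        case False
        then have "A \<noteq> {}" by auto
        then obtain \<alpha> where \<alpha>: "\<alpha> \<in> A" "\<forall>a\<in>A. (a,\<alpha>) \<in> r" using maxex A by blast
        have \<alpha>K: "\<alpha> \<in> K" using \<alpha> A by auto
        have "(\<alpha>,\<beta>) \<notin> r" using False \<alpha> TR by (auto simp: under_def)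
        then have "(\<beta>,\<alpha>) \<in> r" "\<beta> \<noteq> \<alpha>" using TOT[OF \<alpha>K \<beta>K] REF[OF \<beta>K] by auto
        then have \<beta>U: "\<beta> \<in> underS r \<alpha>" by (simp add: underS_def)
        have "x ` A = insert (x \<alpha>) (x ` (A - {\<alpha>}))" using \<alpha> by auto
        then obtain h q where hq: "h \<in> rspan (x ` (A - {\<alpha>}))" "q \<in> \<rat>" "y = h + q *\<^sub>R x \<alpha>"
          using rspan_insert A(4) by metis
        show ?thesis
        proof (cases "q = 0")
          case True
          have "card (A - {\<alpha>}) < n" using A \<alpha> by (meson card_Diff1_less)
          then show ?thesis using less[of "card (A - {\<alpha>})"] A hq True by auto
        next
          case False
          obtain q' where q': "q = of_rat q'" using hq(2) Rats_cases by blast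
          have "q' \<noteq> 0" using False q' by auto
          have "A - {\<alpha>} \<subseteq> underS r \<alpha>" using \<alpha> by (auto simp: underS_def)
          then have "h \<in> rspan (x ` underS r \<alpha>)" using hq(1) rspan_mono[of "x ` (A - {\<alpha>})"] by blast
          then have "(\<beta>, h, q') \<in> underS r \<alpha> \<times> rspan (x ` underS r \<alpha>) \<times> {q::rat. q \<noteq> 0}"
            using \<beta>U \<open>q' \<noteq> 0\<close> by auto
          moreover have "x \<alpha> \<in> {z. h + of_rat q' *\<^sub>R z \<in> Bf \<beta>}" using A(5) hq(3) q' by simp
          ultimately have "x \<alpha> \<in> Av x \<alpha>" unfolding Av_def by blast
          then show ?thesis using xk[OF \<alpha>K] by simp
        qed
      qed
    qed
  qed
  have part2: "|H \<inter> B| <o |K|" if B: "B \<in> I" for B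
  proof -
    obtain C where "C \<in> Fc" "B \<subseteq> C" using Fc(2) B by blast
    then obtain \<beta> where \<beta>: "\<beta> \<in> K" "B \<subseteq> Bf \<beta>" using Bf by (auto simp: bij_betw_def)
    have sub: "H \<inter> B \<subseteq> rspan (x ` under r \<beta>)"
    proof
      fix y assume y: "y \<in> H \<inter> B"
      then obtain F where F: "finite F" "F \<subseteq> x ` K" "y \<in> rspan F"
        using rspan_finite unfolding H_def by blast
      then obtain A where "A \<subseteq> K" "finite A" "F = x ` A" by (meson finite_subset_image)
      then show "y \<in> rspan (x ` under r \<beta>)" using key[OF \<beta>(1)] F y \<beta> by blast
    qed
    define T where "T = (UNIV::rat set) <+> under r \<beta>"
    have "|{\<beta>}| <o |K|"
      using finite_ordLess_infinite[of "|{\<beta>}|" "|K|"] card_of_Well_order Field_card_of infK by (metis finite.emptyI finite.insertI)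
    moreover have "|underS r \<beta>| <o |K|" using card_of_underS[OF Cr] \<beta> FieldK r_def by auto
    ultimately have "|{\<beta>} \<union> underS r \<beta>| <o |K|" using card_of_Un_ordLess_infinite[OF infK] by blast
    moreover have "under r \<beta> \<subseteq> {\<beta>} \<union> underS r \<beta>" by (auto simp: under_def underS_def)
    ultimately have UK: "|under r \<beta>| <o |K|" using card_of_mono1 ordLeq_ordLess_trans by blast
    have TK: "|T| <o |K|" unfolding T_def using card_of_Plus_ordLess_infinite[OF infK ratK UK] .
    have infT: "\<not> finite T" unfolding T_def by (simp add: infinite_UNIV_char_0)
    have RT: "|rspan (x ` under r \<beta>)| \<le>o |T|"
      by (rule rspan_card[OF infT])
        (use card_of_image ordLeq_transitive card_of_Plus2 card_of_Plus1 in \<open>unfold T_def, blast+\<close>)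
    show ?thesis using card_of_mono1[OF sub] RT TK ordLeq_transitive ordLeq_ordLess_trans by blast
  qed
  have part1: "|K| \<le>o |H|"
    using inj rspan_base[of "x ` K"] card_of_ordLeq unfolding H_def by blast
  show ?thesis
    using rspan_subspace[of "x ` K"] part1 part2 unfolding luzin_set_def H_def by blast
qed

end
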